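(* An inverse semigroup $S$ is $E$-unitary if and only if there exist a topological space $X$ and a topologically principal topological partial action $\theta=(\{X_s\}_{s\in S},\{\theta_s\}_{s\in S})$ of $S$ on $X$ such that (i) $\theta$ factors through $\mathbf{G}(S)$, i.e. there is a partial action $\widetilde\theta=(\{X_{[s]}\}_{[s]\in\mathbf{G}(S)},\{\widetilde\theta_{[s]}\}_{[s]\in\mathbf{G}(S)})$ of $\mathbf{G}(S)$ on $X$ with $\widetilde\theta_{[s]}(x)=\theta_s(x)$ for all $s\in S$ and $x\in X_{s^*}$; and (ii) $E(S)=\{s\in S:\theta_s\text{ is an idempotent of }\mathcal{I}(X)\}$.
   Context: Inverse semigroups: $E(S)$ idempotents; $s\le t$ iff $s=ts^*s$. $S$ is $E$-unitary if $e\le s$ with $e\in E(S)$ implies $s\in E(S)$. $\mathbf{G}(S)$ is the maximal group image: the quotient of $S$ by the congruence $s\sim t$ iff there is $u\in S$ with $u\le s$ and $u\le t$; $[s]$ denotes the class of $s$. $\mathcal{I}(X)$ is the inverse semigroup of partial bijections of $X$; its idempotents are identity maps of subsets. A topological partial action of $S$ (or of a group, viewed as an inverse semigroup) on $X$: open $X_s$, homeomorphisms $\theta_s:X_{s^*}\to X_s$ such that $s\mapsto\theta_s$ is a partial homomorphism into $\mathcal{I}(X)$ ($\theta_{s^*}=\theta_s^{-1}$, $\theta_s\theta_t\le\theta_{st}$, $s\le t\Rightarrow\theta_s\le\theta_t$) and $X=\bigcup_{e\in E(S)}X_e$. With $S_x=\{s:x\in X_{s^*}\}$, let $\Lambda(\theta)$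 be the set of $x\in X$ such that every $s\in S_x$ with $\theta_s(x)=x$ admits $e\in E(S)\cap S_x$ with $e\le s$; $\theta$ is topologically principal if $\Lambda(\theta)$ is dense in $X$. *)

theory Defs
  imports "HOL-Analysis.Analysis"
begin

definition inv_semigroup :: "('a \<Rightarrow> 'a \<Rightarrow> 'a) \<Rightarrow> bool" where
  "inv_semigroup m \<longleftrightarrow>
     (\<forall>a b c. m (m a b) c = m a (m b c)) \<and>
     (\<forall>s. \<exists>!t. m (m s t) s = s \<and> m (m t s) t = t)"

definition sinv :: "('a \<Rightarrow> 'a \<Rightarrow> 'a) \<Rightarrow> 'a \<Rightarrow> 'a" where
  "sinv m s = (THE t. m (m s t) s = s \<and> m (m t s) t = t)"

definition idems :: "('a \<Rightarrow> 'a \<Rightarrow> 'a) \<Rightarrow> 'a set" where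
  "idems m = {e. m e e = e}"

definition nat_le :: "('a \<Rightarrow> 'a \<Rightarrow> 'a) \<Rightarrow> 'a \<Rightarrow> 'a \<Rightarrow> bool" where
  "nat_le m s t \<longleftrightarrow> s = m t (m (sinv m s) s)"

definition E_unitary :: "('a \<Rightarrow> 'a \<Rightarrow> 'a) \<Rightarrow> bool" where
  "E_unitary m \<longleftrightarrow> (\<forall>e s. e \<in> idems m \<and> nat_le m e s \<longrightarrow> s \<in> idems m)"

text \<open>Maximal group image G(S): quotient by s ~ t iff some u is below both.\<close>
definition mgi_rel :: "('a \<Rightarrow> 'a \<Rightarrow> 'a) \<Rightarrow> ('a \<times> 'a) set" where
  "mgi_rel m = {(s, t). \<exists>u. nat_le m u s \<and> nat_le m u t}"

definition cls :: "('a \<Rightarrow> 'a \<Rightarrow> 'a) \<Rightarrow> 'a \<Rightarrow> 'a set" where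
  "cls m s = mgi_rel m `` {s}"

definition G_carrier :: "('a \<Rightarrow> 'a \<Rightarrow> 'a) \<Rightarrow> 'a set set" where
  "G_carrier m = UNIV // mgi_rel m"

definition G_mult :: "('a \<Rightarrow> 'a \<Rightarrow> 'a) \<Rightarrow> 'a set \<Rightarrow> 'a set \<Rightarrow> 'a set" where
  "G_mult m A B = cls m (m (SOME a. a \<in> A) (SOME b. b \<in> B))"

definition G_star :: "('a \<Rightarrow> 'a \<Rightarrow> 'a) \<Rightarrow> 'a set \<Rightarrow> 'a set" where
  "G_star m A = cls m (sinv m (SOME a. a \<in> A))"

text \<open>Partial bijections of X are partial maps ('b \<rightharpoonup> 'b);
  theta s has domain Xs (st s) and range Xs s. Order of I(X) is map_le, product is map_comp.\<close>
definition top_partial_action ::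
  "'b topology \<Rightarrow> 'c set \<Rightarrow> ('c \<Rightarrow> 'c \<Rightarrow> 'c) \<Rightarrow> ('c \<Rightarrow> 'c) \<Rightarrow>
   ('c \<Rightarrow> 'b set) \<Rightarrow> ('c \<Rightarrow> ('b \<rightharpoonup> 'b)) \<Rightarrow> bool" where
  "top_partial_action T C mm st Xs \<theta> \<longleftrightarrow>
     (\<forall>s\<in>C. openin T (Xs s)) \<and>
     (\<forall>s\<in>C. dom (\<theta> s) = Xs (st s) \<and> ran (\<theta> s) = Xs s) \<and>
     (\<forall>s\<in>C. homeomorphic_map (subtopology T (Xs (st s))) (subtopology T (Xs s))
                               (\<lambda>x. the (\<theta> s x))) \<and>
     (\<forall>s\<in>C. \<forall>x y. \<theta> (st s) y = Some x \<longleftrightarrow> \<theta> s x = Some y) \<and>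
     (\<forall>s\<in>C. \<forall>t\<in>C. map_le (map_comp (\<theta> s) (\<theta> t)) (\<theta> (mm s t))) \<and>
     (\<forall>s\<in>C. \<forall>t\<in>C. s = mm t (mm (st s) s) \<longrightarrow> map_le (\<theta> s) (\<theta> t)) \<and>
     topspace T = (\<Union>e\<in>{e\<in>C. mm e e = e}. Xs e)"

definition Lambda_set ::
  "('a \<Rightarrow> 'a \<Rightarrow> 'a) \<Rightarrow> 'b topology \<Rightarrow> ('a \<Rightarrow> 'b set) \<Rightarrow> ('a \<Rightarrow> ('b \<rightharpoonup> 'b)) \<Rightarrow> 'b set" where
  "Lambda_set m T Xs \<theta> = {x \<in> topspace T. \<forall>s. x \<in> Xs (sinv m s) \<and> \<theta> s x = Some x \<longrightarrow>
       (\<exists>e\<in>idems m. x \<in> Xs (sinv m e) \<and> nat_le m e s)}"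

definition top_principal ::
  "('a \<Rightarrow> 'a \<Rightarrow> 'a) \<Rightarrow> 'b topology \<Rightarrow> ('a \<Rightarrow> 'b set) \<Rightarrow> ('a \<Rightarrow> ('b \<rightharpoonup> 'b)) \<Rightarrow> bool" where
  "top_principal m T Xs \<theta> \<longleftrightarrow> T closure_of (Lambda_set m T Xs \<theta>) = topspace T"

definition good_action ::
  "('a \<Rightarrow> 'a \<Rightarrow> 'a) \<Rightarrow> 'b topology \<Rightarrow> ('a \<Rightarrow> 'b set) \<Rightarrow> ('a \<Rightarrow> ('b \<rightharpoonup> 'b)) \<Rightarrow> bool" where
  "good_action m T Xs \<theta> \<longleftrightarrow>
     top_partial_action T UNIV m (sinv m) Xs \<theta> \<and>
     top_principal m T Xs \<theta> \<and>
     (\<exists>Xg \<theta>g. top_partial_action T (G_carrier m) (G_mult m) (G_star m) Xg \<theta>g \<and>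
        (\<forall>s x. x \<in> Xs (sinv m s) \<longrightarrow> \<theta>g (cls m s) x = \<theta> s x)) \<and>
     idems m = {s. map_comp (\<theta> s) (\<theta> s) = \<theta> s}"

end

theory Submission imports Defs begin

lemma homeo_discrete:
  assumes "f ` D = R" "inj_on f D"
  shows "homeomorphic_map (discrete_topology D) (discrete_topology R) f"
  using assms by (auto simp: homeomorphic_eq_everything_map open_map_into_discrete_topology
      closed_map_into_discrete_topology)

lemma pmap_homeo:
  assumes "dom f = D" "ran f = Rn" "D \<subseteq> U" "Rn \<subseteq> U"
    "\<And>x x' y. f x = Some y \<Longrightarrow> f x' = Some y \<Longrightarrow> x = x'"
  shows "homeomorphic_map (subtopology (discrete_topology U) D) (subtopology (discrete_topology U) Rn)
     (\<lambda>x. the (f x))"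
proof -
  have i: "U \<inter> D = D" "U \<inter> Rn = Rn" using assms(3,4) by auto
  have "(\<lambda>x. the (f x)) ` D = Rn"
    using assms(1,2) unfolding dom_def ran_def by force
  moreover have "inj_on (\<lambda>x. the (f x)) D"
    using assms(1,5) unfolding inj_on_def dom_def by force
  ultimately show ?thesis unfolding subtopology_discrete_topology i by (rule homeo_discrete)
qed

locale isg =
  fixes m :: "'a \<Rightarrow> 'a \<Rightarrow> 'a"
  assumes isg: "inv_semigroup m"
begin

abbreviation st where "st \<equiv> sinv m"

lemma assoc: "m (m a b) c = m a (m b c)"
  using isg unfolding inv_semigroup_def by blast

lemma inv_ex: "m (m s (st s)) s = s \<and> m (m (st s) s) (st s) = st s"
proof -
  have "\<exists>!t. m (m s t) s = s \<and> m (m t s) t = t" using isg unfolding inv_semigroup_def by blast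
  then show ?thesis unfolding sinv_def by (rule theI')
qed

lemma inv1: "m s (m (st s) s) = s" using inv_ex assoc by metis
lemma inv2: "m (st s) (m s (st s)) = st s" using inv_ex assoc by metis

lemma inv_uniq: assumes "m s (m t s) = s" "m t (m s t) = t" shows "t = st s"
proof -
  have "\<exists>!t. m (m s t) s = s \<and> m (m t s) t = t" using isg unfolding inv_semigroup_def by blast
  moreover have "m (m s t) s = s \<and> m (m t s) t = t" using assms assoc by metis
  moreover have "m (m s (st s)) s = s \<and> m (m (st s) s) (st s) = st s" by (rule inv_ex)
  ultimately show ?thesis by blast
qed

lemma inv_inv[simp]: "st (st s) = s"
  using inv_uniq[of "st s" s] inv1 inv2 by metis

lemma idem_inv: "m e e = e \<Longrightarrow> st e = e"
  using inv_uniq[of e e] by (metis)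

lemma idem_comm: assumes e: "m e e = e" and f: "m f f = f" shows "m e f = m f e"
proof -
  define x where "x = st (m e f)"
  have 1: "m (m e f) (m x (m e f)) = m e f" unfolding x_def by (rule inv1)
  have 2: "m x (m (m e f) x) = x" unfolding x_def by (rule inv2)
  have a: "m (m e f) (m (m f (m x e)) (m e f)) = m e f"
    using 1 e f assoc by metis
  have b: "m (m f (m x e)) (m (m e f) (m f (m x e))) = m f (m x e)"
    using 2 e f assoc by metis
  have fxe: "m f (m x e) = x" using inv_uniq[OF a b] x_def by simp
  have xx: "m x x = x" using fxe 2 e f assoc by metis
  have ef: "m e f = x" using idem_inv[OF xx] x_def by (metis inv_inv)
  have efi: "m (m e f) (m e f) = m e f" using ef xx by simp
  have a2: "m (m e f) (m (m f e) (m e f)) = m e f" using efi e f assoc by metis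
  have b2: "m (m f e) (m (m e f) (m f e)) = m f e"
  proof -
    have "m (m f e) (m f e) = m f e"
    proof -
      define y where "y = st (m f e)"
      have "m (m f e) (m y (m f e)) = m f e" unfolding y_def by (rule inv1)
      have 2: "m y (m (m f e) y) = y" unfolding y_def by (rule inv2)
      have a: "m (m f e) (m (m e (m y f)) (m f e)) = m f e"
        using \<open>m (m f e) (m y (m f e)) = m f e\<close> e f assoc by metis
      have b: "m (m e (m y f)) (m (m f e) (m e (m y f))) = m e (m y f)"
        using 2 e f assoc by metis
      have "m e (m y f) = y" using inv_uniq[OF a b] y_def by simp
      then have yy: "m y y = y" using 2 e f assoc by metis
      show ?thesis using idem_inv[OF yy] y_def by (metis inv_inv yy)
    qed
    then show ?thesis using e f assoc by metis
  qed
  have "m f e = st (m e f)" using inv_uniq[OF a2 b2] .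
  then show ?thesis using idem_inv[OF efi] by simp
qed

lemma inv1x: "m s (m (st s) (m s x)) = m s x" by (metis assoc inv1)
lemma inv2x: "m (st s) (m s (m (st s) x)) = m (st s) x" by (metis assoc inv2)
lemmas invs = inv1 inv2 inv1x inv2x

lemma idem_comm2: "m e e = e \<Longrightarrow> m f f = f \<Longrightarrow> m e (m f x) = m f (m e x)"
  by (metis assoc idem_comm)

lemma idem_mult: "m e e = e \<Longrightarrow> m f f = f \<Longrightarrow> m (m e f) (m e f) = m e f"
  by (metis assoc idem_comm)

lemma sts_idem: "m (m (st s) s) (m (st s) s) = m (st s) s"
  by (metis assoc inv2)
lemma sst_idem: "m (m s (st s)) (m s (st s)) = m s (st s)"
  by (metis assoc inv1)

lemma st_mult: "st (m a b) = m (st b) (st a)"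
proof -
  have c: "m (m b (st b)) (m (st a) a) = m (m (st a) a) (m b (st b))"
    using idem_comm sts_idem sst_idem by blast
  have 1: "m (m a b) (m (m (st b) (st a)) (m a b)) = m a b"
  proof -
    have "m (m a b) (m (m (st b) (st a)) (m a b)) = m a (m (m (m b (st b)) (m (st a) a)) b)"
      by (simp add: assoc)
    also have "\<dots> = m a (m (m (m (st a) a) (m b (st b))) b)" using c by simp
    also have "\<dots> = m a b" by (simp add: assoc invs)
    finally show ?thesis .
  qed
  have 2: "m (m (st b) (st a)) (m (m a b) (m (st b) (st a))) = m (st b) (st a)"
  proof -
    have "m (m (st b) (st a)) (m (m a b) (m (st b) (st a))) = m (st b) (m (m (m (st a) a) (m b (st b))) (st a))"
      by (simp add: assoc)
    also have "\<dots> = m (st b) (m (m (m b (st b)) (m (st a) a)) (st a))" using c by simp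
    also have "\<dots> = m (st b) (st a)" by (simp add: assoc invs)
    finally show ?thesis .
  qed
  show ?thesis using inv_uniq[OF 1 2] by simp
qed

lemma idem_iff_inv: "m e e = e \<Longrightarrow> st e = e" by (rule idem_inv)

lemma nat_le_idem_left: "m e e = e \<Longrightarrow> nat_le m (m e s) s"
proof -
  assume e: "m e e = e"
  have "m s (m (st (m e s)) (m e s)) = m s (m (st s) (m e (m e s)))"
    by (simp add: st_mult idem_inv[OF e] assoc)
  also have "\<dots> = m (m s (st s)) (m e s)" by (simp add: assoc e flip: assoc[of e e])
  also have "\<dots> = m e (m (m s (st s)) s)" using idem_comm[OF e sst_idem] by (metis assoc)
  also have "\<dots> = m e s" by (simp add: assoc invs)
  finally show ?thesis unfolding nat_le_def by simp
qed

lemma st_of_le: assumes "nat_le m u s" shows "st u = m (m (st u) u) (st s)"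
proof -
  have u: "u = m s (m (st u) u)" using assms unfolding nat_le_def .
  have "st u = st (m s (m (st u) u))" using u by simp
  also have "\<dots> = m (m (st u) u) (st s)" by (simp add: st_mult idem_inv[OF sts_idem])
  finally show ?thesis .
qed

lemma le_left: assumes "nat_le m u s" shows "m (m u (st u)) s = u"
proof -
  have u: "u = m s (m (st u) u)" using assms unfolding nat_le_def .
  have su: "st u = m (m (st u) u) (st s)" by (rule st_of_le[OF assms])
  have "m (m u (st u)) s = m s (m (m (st u) u) (m (m (st u) u) (m (st s) s)))"
    using u su by (metis assoc)
  also have "\<dots> = m s (m (m (st u) u) (m (st s) s))"
    using sts_idem by (metis assoc)
  also have "\<dots> = m s (m (m (st s) s) (m (st u) u))"
    using idem_comm[OF sts_idem sts_idem] by metis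
  also have "\<dots> = m s (m (st u) u)" by (simp add: assoc invs)
  also have "\<dots> = u" using u by simp
  finally show ?thesis .
qed

lemma le_star: assumes "nat_le m u s" shows "nat_le m (st u) (st s)"
proof -
  have u: "u = m s (m (st u) u)" using assms unfolding nat_le_def .
  have su: "st u = m (m (st u) u) (st s)" by (rule st_of_le[OF assms])
  have "m (st s) (m u (st u)) = m (st s) (m s (m (m (st u) u) (m (m (st u) u) (st s))))"
    using u su by (metis assoc)
  also have "\<dots> = m (m (m (st s) s) (m (st u) u)) (st s)"
    using sts_idem by (metis assoc)
  also have "\<dots> = m (m (m (st u) u) (m (st s) s)) (st s)"
    using idem_comm[OF sts_idem sts_idem] by metis
  also have "\<dots> = st u" using su by (simp add: assoc invs)
  finally show ?thesis unfolding nat_le_def by simp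
qed

definition R where "R s t \<longleftrightarrow> (\<exists>e. m e e = e \<and> m e s = m e t)"

lemma mgi_R: "mgi_rel m = {(s,t). R s t}"
proof -
  have "(\<exists>u. nat_le m u s \<and> nat_le m u t) \<longleftrightarrow> R s t" for s t
  proof
    assume "\<exists>u. nat_le m u s \<and> nat_le m u t"
    then obtain u where "nat_le m u s" "nat_le m u t" by blast
    then show "R s t" unfolding R_def using le_left sst_idem by metis
  next
    assume "R s t"
    then obtain e where "m e e = e" "m e s = m e t" unfolding R_def by blast
    then show "\<exists>u. nat_le m u s \<and> nat_le m u t" using nat_le_idem_left by metis
  qed
  then show ?thesis unfolding mgi_rel_def by auto
qed

lemma R_refl: "R s s" unfolding R_def using sst_idem by blast
lemma R_sym: "R s t \<Longrightarrow> R t s" unfolding R_def by metis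
lemma R_trans: assumes "R s t" "R t r" shows "R s r"
proof -
  obtain e where e: "m e e = e" "m e s = m e t" using assms(1) unfolding R_def by blast
  obtain f where f: "m f f = f" "m f t = m f r" using assms(2) unfolding R_def by blast
  have "m (m e f) s = m (m e f) r"
    by (metis assoc e f idem_comm)
  then show ?thesis unfolding R_def using idem_mult[OF e(1) f(1)] by blast
qed
lemma R_right: "R s t \<Longrightarrow> R (m s r) (m t r)" unfolding R_def by (metis assoc)
lemma R_left: assumes "R s t" shows "R (m r s) (m r t)"
proof -
  obtain e where e: "m e e = e" "m e s = m e t" using assms(1) unfolding R_def by blast
  define g where "g = m r (m e (st r))"
  have c: "m e (m (st r) r) = m (m (st r) r) e" using idem_comm[OF e(1) sts_idem] .
  have gg: "m g g = g" unfolding g_def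
    by (metis assoc c e(1) inv1)
  have "m g (m r x) = m r (m e x)" for x unfolding g_def
    by (metis assoc c inv1)
  then have "m g (m r s) = m g (m r t)" using e by simp
  then show ?thesis unfolding R_def using gg by blast
qed
lemma R_mult: "R a s \<Longrightarrow> R b t \<Longrightarrow> R (m a b) (m s t)"
  by (meson R_left R_right R_trans)
lemma R_star: "R s t \<Longrightarrow> R (st s) (st t)"
proof -
  assume "R s t"
  then have "(s,t) \<in> mgi_rel m" using mgi_R by simp
  then obtain u where "nat_le m u s" "nat_le m u t" unfolding mgi_rel_def by blast
  then have "(st s, st t) \<in> mgi_rel m" unfolding mgi_rel_def using le_star by blast
  then show ?thesis using mgi_R by simp
qed
lemma R_idem_right: "m e e = e \<Longrightarrow> R (m b e) b"
proof -
  assume e: "m e e = e"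
  define f where "f = m b (m e (st b))"
  have c: "m e (m (st b) b) = m (m (st b) b) e" using idem_comm[OF e sts_idem] .
  have ff: "m f f = f" unfolding f_def by (metis assoc c e inv1)
  have "m f (m b e) = m f b" unfolding f_def by (metis assoc c e inv1)
  then show ?thesis unfolding R_def using ff by blast
qed

lemma mem_cls: "t \<in> cls m s \<longleftrightarrow> R s t"
  unfolding cls_def mgi_R by auto

lemma cls_eq: "R s t \<Longrightarrow> cls m s = cls m t"
  unfolding set_eq_iff mem_cls by (meson R_sym R_trans)

lemma cls_in: "cls m a \<in> G_carrier m"
  unfolding G_carrier_def cls_def by (simp add: quotientI)

lemma G_carrier_cls: "c \<in> G_carrier m \<Longrightarrow> \<exists>a. c = cls m a"
  unfolding G_carrier_def cls_def by (auto elim: quotientE)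

lemma self_cls: "s \<in> cls m s" using R_refl mem_cls by blast

lemma some_cls: "cls m (SOME b. b \<in> cls m a) = cls m a"
proof -
  have "(SOME b. b \<in> cls m a) \<in> cls m a" using self_cls by (metis someI)
  then show ?thesis using mem_cls cls_eq by (metis R_sym)
qed

lemma G_mult_cls: "G_mult m (cls m a) (cls m b) = cls m (m a b)"
proof -
  have "(SOME x. x \<in> cls m a) \<in> cls m a" "(SOME x. x \<in> cls m b) \<in> cls m b"
    using self_cls by (metis someI)+
  then show ?thesis unfolding G_mult_def mem_cls using R_mult cls_eq by (metis R_sym)
qed

lemma G_star_cls: "G_star m (cls m a) = cls m (st a)"
proof -
  have "(SOME x. x \<in> cls m a) \<in> cls m a"
    using self_cls by (metis someI)
  then show ?thesis unfolding G_star_def mem_cls using R_star cls_eq by (metis R_sym)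
qed

lemma cls_star_mem: "t \<in> cls m (st a) \<longleftrightarrow> st t \<in> cls m a"
  unfolding mem_cls by (metis R_star inv_inv)

lemma dir2: assumes ga: "good_action m T Xs \<theta>" shows "E_unitary m"
  unfolding E_unitary_def
proof (intro allI impI, elim conjE)
  fix e s assume eE: "e \<in> idems m" and les: "nat_le m e s"
  have ee: "m e e = e" using eE unfolding idems_def by simp
  from ga[unfolded good_action_def] have PA: "top_partial_action T UNIV m st Xs \<theta>"
    and idm: "idems m = {s. map_comp (\<theta> s) (\<theta> s) = \<theta> s}"
    and ex: "\<exists>Xg \<theta>g. top_partial_action T (G_carrier m) (G_mult m) (G_star m) Xg \<theta>g \<and>
        (\<forall>s x. x \<in> Xs (sinv m s) \<longrightarrow> \<theta>g (cls m s) x = \<theta> s x)"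
    by auto
  from ex obtain Xg \<theta>g where GPA: "top_partial_action T (G_carrier m) (G_mult m) (G_star m) Xg \<theta>g"
    and fac: "\<forall>s x. x \<in> Xs (st s) \<longrightarrow> \<theta>g (cls m s) x = \<theta> s x"
    by (elim exE conjE)
  have "nat_le m e e" unfolding nat_le_def using idem_inv[OF ee] ee by (simp add: assoc)
  then have "(e, s) \<in> mgi_rel m" using les unfolding mgi_rel_def by blast
  then have "R e s" unfolding mgi_R by simp
  then have cs: "cls m s = cls m e" using cls_eq R_sym by blast
  define c where "c = cls m e"
  have cC: "c \<in> G_carrier m" unfolding c_def by (rule cls_in)
  have cst: "G_star m c = c" unfolding c_def G_star_cls idem_inv[OF ee] ..
  have cmu: "G_mult m c c = c" unfolding c_def G_mult_cls ee ..
  have inv0: "\<forall>s\<in>G_carrier m. \<forall>x y. \<theta>g (G_star m s) y = Some x \<longleftrightarrow> \<theta>g s x = Some y"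
    using GPA unfolding top_partial_action_def by (elim conjE)
  have inv: "\<theta>g c y = Some x \<longleftrightarrow> \<theta>g c x = Some y" for x y
    using inv0 cC cst by metis
  have cmp0: "\<forall>s\<in>G_carrier m. \<forall>t\<in>G_carrier m. map_le (map_comp (\<theta>g s) (\<theta>g t)) (\<theta>g (G_mult m s t))"
    using GPA unfolding top_partial_action_def by (elim conjE)
  have cmp: "map_le (map_comp (\<theta>g c) (\<theta>g c)) (\<theta>g c)"
    using cmp0 cC cmu by metis
  have pid: "\<theta>g c x = Some y \<Longrightarrow> y = x" for x y
  proof -
    assume h: "\<theta>g c x = Some y"
    then have "\<theta>g c y = Some x" using inv by blast
    then have "map_comp (\<theta>g c) (\<theta>g c) x = Some x" using h by simp
    then have "\<theta>g c x = Some x" using cmp unfolding map_le_def by (metis domI)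
    then show "y = x" using h by simp
  qed
  have dom0: "\<forall>s\<in>UNIV. dom (\<theta> s) = Xs (st s) \<and> ran (\<theta> s) = Xs s"
    using PA unfolding top_partial_action_def by (elim conjE)
  then have dom: "dom (\<theta> s) = Xs (st s)" by blast
  have th: "\<theta> s x = Some y \<Longrightarrow> y = x" for x y
  proof -
    assume h: "\<theta> s x = Some y"
    then have "x \<in> Xs (st s)" using dom by blast
    then have "\<theta>g (cls m s) x = \<theta> s x" using fac by blast
    then have "\<theta>g c x = Some y" using h cs c_def by simp
    then show ?thesis by (rule pid)
  qed
  have "map_comp (\<theta> s) (\<theta> s) = \<theta> s"
  proof
    fix x show "map_comp (\<theta> s) (\<theta> s) x = \<theta> s x"
    proof (cases "\<theta> s x")
      case None then show ?thesis by simp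
    next
      case (Some y) then have "y = x" by (rule th)
      then show ?thesis using Some by simp
    qed
  qed
  then show "s \<in> idems m" using idm by blast
qed

definition XS :: "'a \<Rightarrow> 'a set set" where
  "XS s = (\<lambda>x. {x}) ` {x. m (m s (st s)) x = x}"
definition TH :: "'a \<Rightarrow> 'a set \<Rightarrow> 'a set option" where
  "TH s A = (if A \<in> XS (st s) then Some {m s (the_elem A)} else None)"

lemma XS_st: "{x} \<in> XS (st s) \<longleftrightarrow> m (m (st s) s) x = x"
  unfolding XS_def by auto

lemma XS_sing: "A \<in> XS s \<Longrightarrow> \<exists>x. A = {x}" unfolding XS_def by auto

lemma XS_mem: "{x} \<in> XS s \<longleftrightarrow> m (m s (st s)) x = x"
  unfolding XS_def by auto

lemma TH_Some: "TH s A = Some B \<longleftrightarrow> (\<exists>x. A = {x} \<and> m (m (st s) s) x = x \<and> B = {m s x})"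
proof (cases "A \<in> XS (st s)")
  case True
  then obtain x where x: "A = {x}" using XS_sing by blast
  then show ?thesis using True XS_st unfolding TH_def by auto
next
  case False
  then show ?thesis using XS_st unfolding TH_def by auto
qed

lemma dom_TH: "dom (TH s) = XS (st s)"
  unfolding TH_def dom_def by (auto split: if_splits)

lemma ran_TH: "ran (TH s) = XS s"
proof
  show "ran (TH s) \<subseteq> XS s"
  proof
    fix B assume "B \<in> ran (TH s)"
    then obtain A where "TH s A = Some B" unfolding ran_def by blast
    then obtain x where "B = {m s x}" unfolding TH_Some by blast
    moreover have "m (m s (st s)) (m s x) = m s x" by (simp add: assoc invs)
    ultimately show "B \<in> XS s" using XS_mem by simp
  qed
next
  show "XS s \<subseteq> ran (TH s)"
  proof
    fix B assume "B \<in> XS s"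
    then obtain y where y: "B = {y}" "m (m s (st s)) y = y" using XS_sing XS_mem by blast
    have "TH s {m (st s) y} = Some B"
      unfolding TH_Some using y by (auto simp: assoc invs)
    then show "B \<in> ran (TH s)" unfolding ran_def by blast
  qed
qed

lemma TH_inv: "TH (st s) B = Some A \<longleftrightarrow> TH s A = Some B"
  unfolding TH_Some inv_inv by (auto simp: assoc invs)

lemma TH_comp: "map_le (map_comp (TH s) (TH t)) (TH (m s t))"
  unfolding map_le_def
proof
  fix A assume "A \<in> dom (map_comp (TH s) (TH t))"
  then obtain C where C: "map_comp (TH s) (TH t) A = Some C" by blast
  then obtain B where B: "TH t A = Some B" "TH s B = Some C"
    by (auto simp: map_comp_def split: option.splits)
  obtain x where x: "A = {x}" "m (m (st t) t) x = x" "B = {m t x}" using B(1) TH_Some by blast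
  have "m (m (st s) s) (m t x) = m t x" using B(2) x TH_Some by auto
  then have "m (m (st (m s t)) (m s t)) x = x" using x(2)
    by (simp add: st_mult assoc)
  moreover have "C = {m (m s t) x}" using B(2) x TH_Some by (auto simp: assoc)
  ultimately have "TH (m s t) A = Some C" using x TH_Some by blast
  then show "map_comp (TH s) (TH t) A = TH (m s t) A" using C by simp
qed

lemma TH_order: assumes "s = m t (m (st s) s)" shows "map_le (TH s) (TH t)"
  unfolding map_le_def
proof
  fix A assume "A \<in> dom (TH s)"
  then obtain B where B: "TH s A = Some B" by blast
  obtain x where x: "A = {x}" "m (m (st s) s) x = x" "B = {m s x}" using B TH_Some by blast
  have le: "nat_le m s t" using assms unfolding nat_le_def .
  have ss: "st s = m (m (st s) s) (st t)" using st_of_le[OF le] .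
  have key: "m (m (st t) t) (m (st s) s) = m (st s) s"
  proof -
    have "m (st s) s = m (m (m (st s) s) (st t)) (m t (m (st s) s))" using ss assms by metis
    also have "\<dots> = m (m (st s) s) (m (m (st t) t) (m (st s) s))" by (simp add: assoc)
    also have "\<dots> = m (m (st t) t) (m (m (st s) s) (m (st s) s))"
      using idem_comm2[OF sts_idem sts_idem] by simp
    also have "\<dots> = m (m (st t) t) (m (st s) s)" using sts_idem by simp
    finally show ?thesis by simp
  qed
  have "m (m (st t) t) x = x" using key x(2) by (metis assoc)
  moreover have "m s x = m t x" using x(2) assms by (metis assoc)
  ultimately have "TH t A = Some B" using x TH_Some by auto
  then show "TH s A = TH t A" using B by simp
qed

abbreviation TT :: "'a set topology" where "TT \<equiv> discrete_topology (range (\<lambda>x. {x}))"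

lemma XS_sub: "XS s \<subseteq> range (\<lambda>x. {x})" unfolding XS_def by auto

lemma TH_inj: "TH s x = Some y \<Longrightarrow> TH s x' = Some y \<Longrightarrow> x = x'"
  using TH_inv by (metis option.inject)

lemma S_pa: "top_partial_action TT UNIV m st XS TH"
  unfolding top_partial_action_def
proof (intro conjI ballI allI)
  fix s
  show "openin TT (XS s)" using XS_sub by simp
  show "dom (TH s) = XS (st s)" by (rule dom_TH)
  show "ran (TH s) = XS s" by (rule ran_TH)
  show "homeomorphic_map (subtopology TT (XS (st s))) (subtopology TT (XS s)) (\<lambda>x. the (TH s x))"
    by (rule pmap_homeo[OF dom_TH ran_TH XS_sub XS_sub TH_inj])
  fix x y show "TH (st s) y = Some x \<longleftrightarrow> TH s x = Some y" by (rule TH_inv)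
next
  fix s t show "map_le (map_comp (TH s) (TH t)) (TH (m s t))" by (rule TH_comp)
  show "s = m t (m (st s) s) \<longrightarrow> map_le (TH s) (TH t)" using TH_order by blast
next
  show "topspace TT = (\<Union>e\<in>{e\<in>UNIV. m e e = e}. XS e)"
  proof
    show "topspace TT \<subseteq> (\<Union>e\<in>{e\<in>UNIV. m e e = e}. XS e)"
    proof
      fix A assume "A \<in> topspace TT"
      then obtain x where x: "A = {x}" by auto
      have e: "m (m x (st x)) (m x (st x)) = m x (st x)" by (rule sst_idem)
      have "A \<in> XS (m x (st x))" unfolding x XS_mem idem_inv[OF e] e by (simp add: assoc invs)
      then show "A \<in> (\<Union>e\<in>{e\<in>UNIV. m e e = e}. XS e)" using e by blast
    qed
  qed (use XS_sub in auto)
qed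

lemma S_Lambda: "Lambda_set m TT XS TH = topspace TT"
proof -
  have "A \<in> Lambda_set m TT XS TH" if "A \<in> topspace TT" for A
  proof -
    have "A \<in> range (\<lambda>x. {x})" using that by simp
    then obtain x where x: "A = {x}" by blast
    have "\<exists>e\<in>idems m. A \<in> XS (st e) \<and> nat_le m e s" if h: "A \<in> XS (st s)" "TH s A = Some A" for s
    proof -
      have sx: "m s x = x" using h(2) x TH_Some by auto
      define e where "e = m x (st x)"
      have ee: "m e e = e" unfolding e_def by (rule sst_idem)
      have "A \<in> XS (st e)" unfolding x idem_inv[OF ee] XS_mem ee unfolding e_def by (simp add: assoc invs)
      moreover have "nat_le m e s" unfolding nat_le_def idem_inv[OF ee] ee
        unfolding e_def using sx by (metis assoc)
      ultimately show ?thesis using ee unfolding idems_def by blast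
    qed
    then show ?thesis unfolding Lambda_set_def using that by blast
  qed
  then show ?thesis unfolding Lambda_set_def by blast
qed

lemma S_principal: "top_principal m TT XS TH"
  unfolding top_principal_def S_Lambda discrete_topology_closure_of by simp

lemma S_idems: "idems m = {s. map_comp (TH s) (TH s) = TH s}"
proof (intro set_eqI iffI)
  fix s assume "s \<in> idems m"
  then have ss: "m s s = s" unfolding idems_def by simp
  have fx: "TH s A = Some B \<Longrightarrow> B = A" for A B
    using TH_Some[of s A B] idem_inv[OF ss] ss by auto
  have "map_comp (TH s) (TH s) = TH s"
  proof
    fix A show "map_comp (TH s) (TH s) A = TH s A"
      by (cases "TH s A") (auto dest: fx)
  qed
  then show "s \<in> {s. map_comp (TH s) (TH s) = TH s}" by simp
next
  fix s assume "s \<in> {s. map_comp (TH s) (TH s) = TH s}"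
  then have c: "map_comp (TH s) (TH s) = TH s" by simp
  have 1: "TH s {st s} = Some {m s (st s)}" unfolding TH_Some by (simp add: assoc invs)
  have "map_comp (TH s) (TH s) {st s} = Some {m s (st s)}" using c 1 by simp
  then have "TH s {m s (st s)} = Some {m s (st s)}" using 1 by simp
  then have "m s (m s (st s)) = m s (st s)" unfolding TH_Some by auto
  then have "m (m s (m s (st s))) s = m (m s (st s)) s" by simp
  then have "m s s = s" by (simp add: assoc invs)
  then show "s \<in> idems m" unfolding idems_def by simp
qed

lemma le_sts: assumes le: "nat_le m u s" shows "m (m (st s) s) (m (st u) u) = m (st u) u"
proof -
  have u: "u = m s (m (st u) u)" using le unfolding nat_le_def .
  have su: "st u = m (m (st u) u) (st s)" by (rule st_of_le[OF le])
  have "m (st u) u = m (st u) (m s (m (st u) u))" using u by simp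
  also have "\<dots> = m (m (m (st u) u) (m (st s) s)) (m (st u) u)" using su by (metis assoc)
  also have "\<dots> = m (m (m (st s) s) (m (st u) u)) (m (st u) u)"
    using idem_comm[OF sts_idem sts_idem] by metis
  also have "\<dots> = m (m (st s) s) (m (st u) u)" using sts_idem by (metis assoc)
  finally show ?thesis by simp
qed

lemma WD: assumes EU: "E_unitary m" and R: "R s t"
  and xs: "m (m (st s) s) x = x" and xt: "m (m (st t) t) x = x" shows "m s x = m t x"
proof -
  have "(s,t) \<in> mgi_rel m" using R mgi_R by simp
  then obtain u where us: "nat_le m u s" and ut: "nat_le m u t" unfolding mgi_rel_def by blast
  have u1: "u = m s (m (st u) u)" using us unfolding nat_le_def .
  have u2: "u = m t (m (st u) u)" using ut unfolding nat_le_def .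
  have su: "st u = m (m (st u) u) (st s)" by (rule st_of_le[OF us])
  have sut: "st u = m (m (st u) u) (st t)" by (rule st_of_le[OF ut])
  define f where "f = m (st u) u"
  have ff: "m f f = f" unfolding f_def by (rule sts_idem)
  have "m (m (st s) t) f = m (st s) u" unfolding f_def using u2 by (metis assoc)
  also have "\<dots> = f" unfolding f_def using u1 le_sts[OF us] by (metis assoc)
  finally have "nat_le m f (m (st s) t)" unfolding nat_le_def idem_inv[OF ff] ff by simp
  then have p: "m (m (st s) t) (m (st s) t) = m (st s) t"
    using EU ff unfolding E_unitary_def idems_def by blast
  define g where "g = m u (st u)"
  have gg: "m g g = g" unfolding g_def by (rule sst_idem)
  have "m (st t) g = st u"
  proof -
    have "m (st t) g = m (m (m (st t) t) (m (st u) u)) (st u)" unfolding g_def using u2 by (metis assoc)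
    also have "\<dots> = m (m (st u) u) (st u)" using le_sts[OF ut] by simp
    also have "\<dots> = st u" by (simp add: assoc invs)
    finally show ?thesis .
  qed
  then have "m (m s (st t)) g = m s (st u)" by (simp add: assoc)
  also have "\<dots> = m u (st s)" using su u1 by (metis assoc)
  also have "\<dots> = g" unfolding g_def using su by (metis assoc inv1)
  finally have "nat_le m g (m s (st t))" unfolding nat_le_def idem_inv[OF gg] gg by simp
  then have q: "m (m s (st t)) (m s (st t)) = m s (st t)"
    using EU gg unfolding E_unitary_def idems_def by blast
  have p': "m (st t) s = m (st s) t" using idem_inv[OF p] by (simp add: st_mult)
  have q': "m t (st s) = m s (st t)" using idem_inv[OF q] by (simp add: st_mult)
  have A: "m s (m (st t) t) = m t (m (st t) s)"
    using p' q' by (metis assoc)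
  have B: "m t (m (st s) s) = m s (m (st s) t)"
    using p' q' by (metis assoc)
  have C: "m t (m (st t) s) = m s (m (st s) t)"
  proof -
    have "m t (m (st t) s) = m (m t (st t)) (m (m s (st s)) s)" by (simp add: assoc invs)
    also have "\<dots> = m (m s (st s)) (m (m t (st t)) s)"
      using idem_comm[OF sst_idem sst_idem] by (metis assoc)
    also have "\<dots> = m s (m (st s) (m t (m (st t) s)))" by (simp add: assoc)
    also have "\<dots> = m s (m (m (st s) t) (m (st s) t))" using p' by (simp add: assoc)
    also have "\<dots> = m s (m (st s) t)" using p by simp
    finally show ?thesis .
  qed
  have "m s x = m s (m (m (st t) t) x)" using xt by simp
  also have "\<dots> = m (m t (m (st s) s)) x" using A B C by (metis assoc)
  also have "\<dots> = m t x" using xs by (simp add: assoc)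
  finally show ?thesis .
qed

end

locale eisg = isg +
  assumes EU: "E_unitary m"
begin

definition XG :: "'a set \<Rightarrow> 'a set set" where "XG c = (\<Union>s\<in>c. XS s)"
definition THG :: "'a set \<Rightarrow> 'a set \<Rightarrow> 'a set option" where
  "THG c A = (if \<exists>s\<in>c. A \<in> XS (st s) then TH (SOME s. s \<in> c \<and> A \<in> XS (st s)) A else None)"

lemma TH_WD: assumes "R s t" "A \<in> XS (st s)" "A \<in> XS (st t)" shows "TH s A = TH t A"
proof -
  obtain x where x: "A = {x}" using assms(2) XS_sing by blast
  have "m s x = m t x" using WD[OF EU assms(1)] assms(2,3) x XS_st by auto
  then show ?thesis using assms(2,3) unfolding TH_def x by simp
qed

lemma THG_Some: "THG (cls m a) A = Some B \<longleftrightarrow> (\<exists>s\<in>cls m a. TH s A = Some B)"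
proof
  assume h: "THG (cls m a) A = Some B"
  then have ex: "\<exists>s\<in>cls m a. A \<in> XS (st s)" unfolding THG_def by (auto split: if_splits)
  then have "(SOME s. s \<in> cls m a \<and> A \<in> XS (st s)) \<in> cls m a" by (metis (mono_tags, lifting) someI)
  moreover have "TH (SOME s. s \<in> cls m a \<and> A \<in> XS (st s)) A = Some B" using h ex unfolding THG_def by simp
  ultimately show "\<exists>s\<in>cls m a. TH s A = Some B" by blast
next
  assume "\<exists>s\<in>cls m a. TH s A = Some B"
  then obtain s where s: "s \<in> cls m a" "TH s A = Some B" by blast
  have As: "A \<in> XS (st s)" using s(2) dom_TH by blast
  define s' where "s' = (SOME s. s \<in> cls m a \<and> A \<in> XS (st s))"
  have s': "s' \<in> cls m a \<and> A \<in> XS (st s')" unfolding s'_def using s(1) As by (metis (mono_tags, lifting) someI)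
  have "R s' s" using s(1) s' unfolding mem_cls by (meson R_sym R_trans)
  then have "TH s' A = TH s A" using TH_WD s' As by blast
  then show "THG (cls m a) A = Some B" unfolding THG_def using s(1) As s s'_def by auto
qed

lemma dom_THG: "dom (THG (cls m a)) = (\<Union>s\<in>cls m a. XS (st s))"
proof (intro set_eqI iffI)
  fix A assume "A \<in> dom (THG (cls m a))"
  then obtain B where "THG (cls m a) A = Some B" by blast
  then obtain s where "s \<in> cls m a" "TH s A = Some B" using THG_Some by blast
  then show "A \<in> (\<Union>s\<in>cls m a. XS (st s))" using dom_TH by blast
next
  fix A assume "A \<in> (\<Union>s\<in>cls m a. XS (st s))"
  then obtain s where s: "s \<in> cls m a" "A \<in> XS (st s)" by blast
  then obtain B where "TH s A = Some B" using dom_TH by blast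
  then have "THG (cls m a) A = Some B" using s THG_Some by blast
  then show "A \<in> dom (THG (cls m a))" by blast
qed

lemma ran_THG: "ran (THG (cls m a)) = XG (cls m a)"
proof (intro set_eqI iffI)
  fix B assume "B \<in> ran (THG (cls m a))"
  then obtain A where "THG (cls m a) A = Some B" unfolding ran_def by blast
  then obtain s where "s \<in> cls m a" "TH s A = Some B" using THG_Some by blast
  then show "B \<in> XG (cls m a)" unfolding XG_def using ran_TH unfolding ran_def by blast
next
  fix B assume "B \<in> XG (cls m a)"
  then obtain s where s: "s \<in> cls m a" "B \<in> XS s" unfolding XG_def by blast
  then have "B \<in> ran (TH s)" using ran_TH by simp
  then obtain A where "TH s A = Some B" unfolding ran_def by blast
  then have "THG (cls m a) A = Some B" using s THG_Some by blast
  then show "B \<in> ran (THG (cls m a))" unfolding ran_def by blast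
qed

lemma XG_star: "XG (G_star m (cls m a)) = (\<Union>s\<in>cls m a. XS (st s))"
  unfolding G_star_cls XG_def
proof (intro set_eqI iffI)
  fix A assume "A \<in> (\<Union>t\<in>cls m (st a). XS t)"
  then obtain t where t: "t \<in> cls m (st a)" "A \<in> XS t" by blast
  have "st t \<in> cls m a" using t(1) cls_star_mem by blast
  moreover have "A \<in> XS (st (st t))" using t(2) by simp
  ultimately show "A \<in> (\<Union>s\<in>cls m a. XS (st s))" by blast
next
  fix A assume "A \<in> (\<Union>s\<in>cls m a. XS (st s))"
  then obtain s where s: "s \<in> cls m a" "A \<in> XS (st s)" by blast
  have "st s \<in> cls m (st a)" using s(1) cls_star_mem by simp
  then show "A \<in> (\<Union>t\<in>cls m (st a). XS t)" using s(2) by blast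
qed

lemma THG_inv: "THG (G_star m (cls m a)) B = Some A \<longleftrightarrow> THG (cls m a) A = Some B"
  unfolding G_star_cls THG_Some
proof
  assume "\<exists>t\<in>cls m (st a). TH t B = Some A"
  then obtain t where t: "t \<in> cls m (st a)" "TH t B = Some A" by blast
  have "st t \<in> cls m a" using t(1) cls_star_mem by blast
  moreover have "TH (st t) A = Some B" using TH_inv[of "st t" B A] t(2) by simp
  ultimately show "\<exists>s\<in>cls m a. TH s A = Some B" by blast
next
  assume "\<exists>s\<in>cls m a. TH s A = Some B"
  then obtain s where s: "s \<in> cls m a" "TH s A = Some B" by blast
  have "st s \<in> cls m (st a)" using s(1) cls_star_mem by simp
  moreover have "TH (st s) B = Some A" using TH_inv s(2) by blast
  ultimately show "\<exists>t\<in>cls m (st a). TH t B = Some A" by blast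
qed

lemma THG_inj: "THG c x = Some y \<Longrightarrow> THG c x' = Some y \<Longrightarrow> c \<in> G_carrier m \<Longrightarrow> x = x'"
proof -
  assume h: "THG c x = Some y" "THG c x' = Some y" "c \<in> G_carrier m"
  then obtain a where a: "c = cls m a" using G_carrier_cls by blast
  have "THG (G_star m c) y = Some x" "THG (G_star m c) y = Some x'" using h THG_inv unfolding a by blast+
  then show "x = x'" by simp
qed

lemma G_pa: "top_partial_action TT (G_carrier m) (G_mult m) (G_star m) XG THG"
  unfolding top_partial_action_def
proof (intro conjI ballI allI)
  fix c assume c: "c \<in> G_carrier m"
  then obtain a where a: "c = cls m a" using G_carrier_cls by blast
  have sub: "XG c' \<subseteq> range (\<lambda>x. {x})" for c' unfolding XG_def using XS_sub by blast
  show "openin TT (XG c)" using sub by simp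
  show d: "dom (THG c) = XG (G_star m c)" unfolding a dom_THG XG_star ..
  show r: "ran (THG c) = XG c" unfolding a ran_THG ..
  show "homeomorphic_map (subtopology TT (XG (G_star m c))) (subtopology TT (XG c)) (\<lambda>x. the (THG c x))"
    by (rule pmap_homeo[OF d r sub sub]) (use THG_inj c in blast)
  fix x y show "THG (G_star m c) y = Some x \<longleftrightarrow> THG c x = Some y" unfolding a by (rule THG_inv)
next
  fix c d assume c: "c \<in> G_carrier m" and d: "d \<in> G_carrier m"
  obtain a where a: "c = cls m a" using G_carrier_cls c by blast
  obtain b where b: "d = cls m b" using G_carrier_cls d by blast
  show "map_le (map_comp (THG c) (THG d)) (THG (G_mult m c d))"
    unfolding map_le_def
  proof
    fix A assume "A \<in> dom (map_comp (THG c) (THG d))"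
    then obtain C where C: "map_comp (THG c) (THG d) A = Some C" by blast
    then obtain B where B: "THG d A = Some B" "THG c B = Some C"
      by (auto simp: map_comp_def split: option.splits)
    obtain t where t: "t \<in> cls m b" "TH t A = Some B" using B(1) b THG_Some by blast
    obtain s where s: "s \<in> cls m a" "TH s B = Some C" using B(2) a THG_Some by blast
    have "TH (m s t) A = Some C" using TH_comp[of s t] t(2) s(2) unfolding map_le_def
      by (metis domI map_comp_simps(2))
    moreover have "m s t \<in> cls m (m a b)" using s(1) t(1) unfolding mem_cls by (rule R_mult)
    ultimately have "THG (G_mult m c d) A = Some C" unfolding a b G_mult_cls THG_Some by blast
    then show "map_comp (THG c) (THG d) A = THG (G_mult m c d) A" using C by simp
  qed
  show "c = G_mult m d (G_mult m (G_star m c) c) \<longrightarrow> map_le (THG c) (THG d)"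
  proof
    assume "c = G_mult m d (G_mult m (G_star m c) c)"
    then have "c = cls m (m b (m (st a) a))" unfolding a b G_star_cls G_mult_cls .
    also have "\<dots> = cls m b" using R_idem_right[OF sts_idem] cls_eq by blast
    finally show "map_le (THG c) (THG d)" using b by simp
  qed
next
  show "topspace TT = (\<Union>e\<in>{e\<in>G_carrier m. G_mult m e e = e}. XG e)"
  proof
    show "topspace TT \<subseteq> (\<Union>e\<in>{e\<in>G_carrier m. G_mult m e e = e}. XG e)"
    proof
      fix A assume "A \<in> topspace TT"
      then have "A \<in> range (\<lambda>x. {x})" by simp
      then obtain x where x: "A = {x}" by blast
      have e: "m (m x (st x)) (m x (st x)) = m x (st x)" by (rule sst_idem)
      have "A \<in> XS (m x (st x))" unfolding x XS_mem idem_inv[OF e] e by (simp add: assoc invs)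
      then have "A \<in> XG (cls m (m x (st x)))" unfolding XG_def using self_cls by blast
      moreover have "G_mult m (cls m (m x (st x))) (cls m (m x (st x))) = cls m (m x (st x))"
        unfolding G_mult_cls e ..
      ultimately show "A \<in> (\<Union>e\<in>{e\<in>G_carrier m. G_mult m e e = e}. XG e)" using cls_in by blast
    qed
  qed (auto simp: XG_def dest: XS_sub[THEN subsetD])
qed

lemma good: "good_action m TT XS TH"
  unfolding good_action_def
proof (intro conjI exI)
  show "top_partial_action TT UNIV m st XS TH" by (rule S_pa)
  show "top_principal m TT XS TH" by (rule S_principal)
  show "top_partial_action TT (G_carrier m) (G_mult m) (G_star m) XG THG" by (rule G_pa)
  show "\<forall>s x. x \<in> XS (st s) \<longrightarrow> THG (cls m s) x = TH s x"
  proof (intro allI impI)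
    fix s A assume "A \<in> XS (st s)"
    then obtain B where "TH s A = Some B" using dom_TH by blast
    then have "THG (cls m s) A = Some B" using THG_Some self_cls by blast
    then show "THG (cls m s) A = TH s A" using \<open>TH s A = Some B\<close> by simp
  qed
  show "idems m = {s. map_comp (TH s) (TH s) = TH s}" by (rule S_idems)
qed

end

theorem theorem7p13:
  fixes m :: "'a \<Rightarrow> 'a \<Rightarrow> 'a"
  assumes "inv_semigroup m"
  shows "(E_unitary m \<longrightarrow> (\<exists>(T :: 'a set topology) Xs \<theta>. good_action m T Xs \<theta>)) \<and>
         ((\<exists>(T :: 'b topology) Xs \<theta>. good_action m T Xs \<theta>) \<longrightarrow> E_unitary m)"
proof (intro conjI impI)
  interpret isg m by standard (rule assms)
  assume "E_unitary m"
  then interpret eisg m by unfold_locales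
  show "\<exists>(T :: 'a set topology) Xs \<theta>. good_action m T Xs \<theta>" using good by blast
next
  interpret isg m by standard (rule assms)
  assume "\<exists>(T :: 'b topology) Xs \<theta>. good_action m T Xs \<theta>"
  then show "E_unitary m" using dir2 by blast
qed

end
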